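(* Let $G$ be a simple stochastic game, $A$ a subset of its arcs, and $\sigma,\sigma'$ positional MAX strategies. Then $v^{G}_{\sigma'|_A \sigma}(x) = v^{G[A,\sigma]}_{\sigma'}(x)$ for every vertex $x$ of $G$.
   Context: A simple stochastic game (SSG) $G$ is a finite directed graph whose vertex set is partitioned into MAX vertices, MIN vertices, random vertices and a nonempty set of sinks; every non-sink vertex has at least one outgoing arc, every sink has exactly one outgoing arc, a self-loop; each random vertex $x$ carries a rational probability distribution $p_x$ on its out-neighbourhood, positive on every out-neighbour; each sink $s$ has rational value $\mathrm{Val}(s)\in[0,1]$. A history is a finite directed path; a general MAX (resp. MIN) strategy maps each history ending in a MAX (resp. MIN) vertex $x$ to an out-neighbour of $x$; it is positional if it depends only on the last vertex. Under strategies $\sigma,\tau$ from start $x_0$, the random play is built step by step: at a MAX (MIN) vertex the next vertex is $\sigma$ (resp. $\tau$) applied to the history so far, at a random vertex $x$ it is drawn according to $p_x$ independently, and at a sink the play stays there. The play's value is $\mathrm{Val}(s)$ if it reaches sink $s$, else $0$; $v^G_{\sigma,\tau}(x_0)$ is its expectation. For a MAX strategy $\sigma$, $v^G_\sigma$ is the value $v^G_{\sigma,\tau}$ under a best response $\tau$, i.e. a MIN strategy with $v_{\sigma,\tau}\le v_{\sigma,\tau'}$ pointwise for all general MIN strategies $\tau'$ (for positional $\sigma$ a positional best response exists). Concatenation: for MAX strategies $\sigma,\sigma'$ and a set $A$ of arcs, $\sigma'|_A\sigma$ is the (generally non-positional) MAX strategy that plays like $\sigma'$ until an arc of $A$ is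 crossed, and from then on plays like $\sigma$. Transformed game: $G[A,\sigma]$ is obtained from a copy of $G$ by replacing each arc $e=(x,y)\in A$ by an arc $(x,s_e)$ to a new sink $s_e$ of value $v^G_\sigma(y)$ (for random $x$, $p_x(s_e)=p_x(y)$); $y$ is kept. Positional strategies of $G$ are identified with those of $G[A,\sigma]$ (a MAX vertex $x$ with $\sigma'(x)=y$, $(x,y)\in A$, moves to $s_{(x,y)}$). *)

theory Defs
  imports Complex_Main
begin

record 'v ssg =
  verts :: "'v set"
  arcs  :: "('v \<times> 'v) set"
  vmax  :: "'v set"
  vmin  :: "'v set"
  vrand :: "'v set"
  sinks :: "'v set"
  prob  :: "'v \<Rightarrow> 'v \<Rightarrow> real"
  val   :: "'v \<Rightarrow> real"

definition succs :: "('v, 'a) ssg_scheme \<Rightarrow> 'v \<Rightarrow> 'v set" where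
  "succs G x = {y. (x, y) \<in> arcs G}"

definition is_ssg :: "('v, 'a) ssg_scheme \<Rightarrow> bool" where
  "is_ssg G \<longleftrightarrow>
     finite (verts G) \<and>
     arcs G \<subseteq> verts G \<times> verts G \<and>
     vmax G \<union> vmin G \<union> vrand G \<union> sinks G = verts G \<and>
     vmax G \<inter> vmin G = {} \<and> vmax G \<inter> vrand G = {} \<and> vmax G \<inter> sinks G = {} \<and>
     vmin G \<inter> vrand G = {} \<and> vmin G \<inter> sinks G = {} \<and> vrand G \<inter> sinks G = {} \<and>
     sinks G \<noteq> {} \<and>
     (\<forall>x \<in> verts G - sinks G. succs G x \<noteq> {}) \<and>
     (\<forall>s \<in> sinks G. succs G s = {s}) \<and>
     (\<forall>x \<in> vrand G. (\<forall>y. prob G x y \<in> \<rat>) \<and>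
        (\<forall>y \<in> succs G x. prob G x y > 0) \<and>
        (\<forall>y. y \<notin> succs G x \<longrightarrow> prob G x y = 0) \<and>
        sum (prob G x) (succs G x) = 1) \<and>
     (\<forall>s \<in> sinks G. val G s \<in> \<rat> \<and> 0 \<le> val G s \<and> val G s \<le> 1)"

definition is_history :: "('v, 'a) ssg_scheme \<Rightarrow> 'v list \<Rightarrow> bool" where
  "is_history G h \<longleftrightarrow> h \<noteq> [] \<and> set h \<subseteq> verts G \<and>
     (\<forall>i. Suc i < length h \<longrightarrow> (h ! i, h ! Suc i) \<in> arcs G)"

definition max_strategy :: "('v, 'a) ssg_scheme \<Rightarrow> ('v list \<Rightarrow> 'v) \<Rightarrow> bool" where
  "max_strategy G \<sigma> \<longleftrightarrow>
     (\<forall>h. is_history G h \<and> last h \<in> vmax G \<longrightarrow> (last h, \<sigma> h) \<in> arcs G)"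

definition min_strategy :: "('v, 'a) ssg_scheme \<Rightarrow> ('v list \<Rightarrow> 'v) \<Rightarrow> bool" where
  "min_strategy G \<tau> \<longleftrightarrow>
     (\<forall>h. is_history G h \<and> last h \<in> vmin G \<longrightarrow> (last h, \<tau> h) \<in> arcs G)"

definition positional_max :: "('v, 'a) ssg_scheme \<Rightarrow> ('v \<Rightarrow> 'v) \<Rightarrow> bool" where
  "positional_max G s \<longleftrightarrow> (\<forall>x \<in> vmax G. (x, s x) \<in> arcs G)"

definition pos :: "('v \<Rightarrow> 'v) \<Rightarrow> ('v list \<Rightarrow> 'v)" where
  "pos s = (\<lambda>h. s (last h))"

definition trans :: "('v, 'a) ssg_scheme \<Rightarrow> ('v list \<Rightarrow> 'v) \<Rightarrow> ('v list \<Rightarrow> 'v)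
                      \<Rightarrow> 'v list \<Rightarrow> 'v \<Rightarrow> real" where
  "trans G \<sigma> \<tau> h y =
     (let x = last h in
      if x \<in> vmax G then (if \<sigma> h = y then 1 else 0)
      else if x \<in> vmin G then (if \<tau> h = y then 1 else 0)
      else if x \<in> vrand G then prob G x y
      else if x \<in> sinks G then (if y = x then 1 else 0)
      else 0)"

definition hprob :: "('v, 'a) ssg_scheme \<Rightarrow> ('v list \<Rightarrow> 'v) \<Rightarrow> ('v list \<Rightarrow> 'v)
                      \<Rightarrow> 'v list \<Rightarrow> real" where
  "hprob G \<sigma> \<tau> h =
     (\<Prod>i < length h - 1. trans G \<sigma> \<tau> (take (Suc i) h) (h ! Suc i))"

definition sink_payoff :: "('v, 'a) ssg_scheme \<Rightarrow> 'v \<Rightarrow> real" where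
  "sink_payoff G x = (if x \<in> sinks G then val G x else 0)"

text \<open>Expected payoff of the play after n steps: the play has value Val(s) if it has
  reached sink s (sinks are absorbing), and 0 otherwise.\<close>

definition step_value :: "('v, 'a) ssg_scheme \<Rightarrow> ('v list \<Rightarrow> 'v) \<Rightarrow> ('v list \<Rightarrow> 'v)
                           \<Rightarrow> 'v \<Rightarrow> nat \<Rightarrow> real" where
  "step_value G \<sigma> \<tau> x0 n =
     (\<Sum>h \<in> {h. length h = Suc n \<and> hd h = x0 \<and> set h \<subseteq> verts G}.
        hprob G \<sigma> \<tau> h * sink_payoff G (last h))"

text \<open>v_{\<sigma>,\<tau>}(x0): expected value of the play, i.e. the limit of the (nondecreasing)
  n-step payoffs, since sinks are absorbing and the play's value is Val of the sink
  it reaches (0 if none).\<close>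

definition play_value :: "('v, 'a) ssg_scheme \<Rightarrow> ('v list \<Rightarrow> 'v) \<Rightarrow> ('v list \<Rightarrow> 'v)
                           \<Rightarrow> 'v \<Rightarrow> real" where
  "play_value G \<sigma> \<tau> x0 = (SUP n. step_value G \<sigma> \<tau> x0 n)"

definition best_response :: "('v, 'a) ssg_scheme \<Rightarrow> ('v list \<Rightarrow> 'v) \<Rightarrow> ('v list \<Rightarrow> 'v) \<Rightarrow> bool" where
  "best_response G \<sigma> \<tau> \<longleftrightarrow> min_strategy G \<tau> \<and>
     (\<forall>\<tau>'. min_strategy G \<tau>' \<longrightarrow> (\<forall>x \<in> verts G. play_value G \<sigma> \<tau> x \<le> play_value G \<sigma> \<tau>' x))"

text \<open>v_\<sigma>(x): value under a best response of MIN; stated as the pointwise infimum over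
  all general MIN strategies, which coincides with v_{\<sigma>,\<tau>}(x) for any best response \<tau>.\<close>

definition strat_value :: "('v, 'a) ssg_scheme \<Rightarrow> ('v list \<Rightarrow> 'v) \<Rightarrow> 'v \<Rightarrow> real" where
  "strat_value G \<sigma> x = (INF \<tau> \<in> {\<tau>. min_strategy G \<tau>}. play_value G \<sigma> \<tau> x)"

text \<open>\<sigma>'|_A \<sigma>: play like \<sigma>' until an arc of A is crossed, afterwards play like \<sigma>
  on the history starting at the head of the first crossed A-arc.\<close>

definition concat_strategy :: "('v list \<Rightarrow> 'v) \<Rightarrow> ('v \<times> 'v) set \<Rightarrow> ('v list \<Rightarrow> 'v)
                                \<Rightarrow> ('v list \<Rightarrow> 'v)" where
  "concat_strategy \<sigma>' A \<sigma> h =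
     (if \<exists>i. Suc i < length h \<and> (h ! i, h ! Suc i) \<in> A
      then \<sigma> (drop (Suc (LEAST i. Suc i < length h \<and> (h ! i, h ! Suc i) \<in> A)) h)
      else \<sigma>' h)"

text \<open>Vertices: Inl x for the copy of vertex x of G, Inr e for the new sink s_e, e \<in> A.\<close>

definition transformed :: "('v, 'a) ssg_scheme \<Rightarrow> ('v \<times> 'v) set \<Rightarrow> ('v list \<Rightarrow> 'v)
                            \<Rightarrow> ('v + ('v \<times> 'v)) ssg" where
  "transformed G A \<sigma> =
     \<lparr> verts = Inl ` verts G \<union> Inr ` A,
       arcs = {(Inl x, Inl y) | x y. (x, y) \<in> arcs G - A}
              \<union> {(Inl x, Inr (x, y)) | x y. (x, y) \<in> A}
              \<union> {(Inr e, Inr e) | e. e \<in> A},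
       vmax = Inl ` vmax G,
       vmin = Inl ` vmin G,
       vrand = Inl ` vrand G,
       sinks = Inl ` sinks G \<union> Inr ` A,
       prob = (\<lambda>u w. case (u, w) of
                 (Inl x, Inl y) \<Rightarrow> (if (x, y) \<in> A then 0 else prob G x y)
               | (Inl x, Inr (x', y)) \<Rightarrow> (if x' = x \<and> (x, y) \<in> A then prob G x y else 0)
               | _ \<Rightarrow> 0),
       val = (\<lambda>u. case u of
                 Inl s \<Rightarrow> val G s
               | Inr (x, y) \<Rightarrow> strat_value G \<sigma> y) \<rparr>"

definition lift_positional :: "('v \<times> 'v) set \<Rightarrow> ('v \<Rightarrow> 'v) \<Rightarrow> ('v + ('v \<times> 'v) \<Rightarrow> 'v + ('v \<times> 'v))" where
  "lift_positional A s u = (case u of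
       Inl x \<Rightarrow> (if (x, s x) \<in> A then Inr (x, s x) else Inl (s x))
     | Inr e \<Rightarrow> Inr e)"

end

theory Submission
  imports Defs
begin
fun W :: "('v, 'a) ssg_scheme \<Rightarrow> ('v list \<Rightarrow> 'v) \<Rightarrow> ('v list \<Rightarrow> 'v) \<Rightarrow> 'v list \<Rightarrow> nat \<Rightarrow> real" where
  "W G s t h 0 = sink_payoff G (last h)"
| "W G s t h (Suc n) = (\<Sum>y\<in>verts G. trans G s t h y * W G s t (h @ [y]) n)"

definition Winf where "Winf G s t h = (SUP n. W G s t h n)"

definition good :: "('v, 'a) ssg_scheme \<Rightarrow> bool" where
  "good G \<longleftrightarrow> finite (verts G) \<and> sinks G \<inter> (vmax G \<union> vmin G \<union> vrand G) = {} \<and>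
    (\<forall>x\<in>vrand G. (\<forall>y. 0 \<le> prob G x y) \<and> sum (prob G x) (verts G) \<le> 1) \<and>
    (\<forall>s\<in>sinks G. 0 \<le> val G s \<and> val G s \<le> 1)"

lemma trans_nonneg: "good G \<Longrightarrow> 0 \<le> trans G s t h y"
  unfolding good_def trans_def Let_def by auto

lemma trans_sum_le1: assumes "good G" shows "(\<Sum>y\<in>verts G. trans G s t h y) \<le> 1"
proof -
  have fin: "finite (verts G)" using assms good_def by auto
  show ?thesis
  proof (cases "last h \<in> vmax G \<or> last h \<in> vmin G \<or> last h \<in> vrand G \<or> last h \<in> sinks G")
    case True
    then consider "last h \<in> vmax G" | "last h \<notin> vmax G" "last h \<in> vmin G"
      | "last h \<notin> vmax G" "last h \<notin> vmin G" "last h \<in> vrand G"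
      | "last h \<notin> vmax G" "last h \<notin> vmin G" "last h \<notin> vrand G" "last h \<in> sinks G" by blast
    then show ?thesis
    proof cases
      case 3 then show ?thesis using assms unfolding good_def trans_def Let_def by auto
    qed (use fin in \<open>auto simp: trans_def Let_def sum.delta sum.delta'\<close>)
  next
    case False
    then show ?thesis unfolding trans_def Let_def by auto
  qed
qed

lemma payoff_bounds: "good G \<Longrightarrow> 0 \<le> sink_payoff G x \<and> sink_payoff G x \<le> 1"
  unfolding good_def sink_payoff_def by auto

lemma W_bounds: assumes "good G" shows "0 \<le> W G s t h n \<and> W G s t h n \<le> 1"
proof (induction n arbitrary: h)
  case 0 then show ?case using payoff_bounds[OF assms] by simp
next
  case (Suc n)
  have "0 \<le> W G s t h (Suc n)"
    using Suc trans_nonneg[OF assms] by (auto intro!: sum_nonneg)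
  moreover have "W G s t h (Suc n) \<le> (\<Sum>y\<in>verts G. trans G s t h y)"
    using Suc trans_nonneg[OF assms] by (auto intro!: sum_mono mult_left_le)
  ultimately show ?case using trans_sum_le1[OF assms, of s t h] by simp
qed

lemma W_sink: assumes "good G" "last h \<in> sinks G" "last h \<in> verts G"
  shows "W G s t h n = sink_payoff G (last h)"
  using assms(2,3)
proof (induction n arbitrary: h)
  case 0 then show ?case by simp
next
  case (Suc n)
  have ns: "last h \<notin> vmax G" "last h \<notin> vmin G" "last h \<notin> vrand G"
    using assms(1) Suc.prems unfolding good_def by auto
  have "W G s t h (Suc n) = (\<Sum>y\<in>verts G. (if y = last h then W G s t (h @ [y]) n else 0))"
    using ns Suc.prems by (auto simp: trans_def Let_def intro!: sum.cong)
  also have "\<dots> = W G s t (h @ [last h]) n" using Suc.prems assms(1) by (simp add: sum.delta good_def)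
  also have "\<dots> = sink_payoff G (last h)" using Suc.IH[of "h @ [last h]"] Suc.prems by simp
  finally show ?case .
qed

lemma W_mono: assumes "good G" "last h \<in> verts G"
  shows "W G s t h n \<le> W G s t h (Suc n)"
  using assms(2)
proof (induction n arbitrary: h)
  case 0
  show ?case
  proof (cases "last h \<in> sinks G")
    case True
    then show ?thesis using W_sink[OF assms(1) True 0, of s t 0] W_sink[OF assms(1) True 0, of s t "Suc 0"] by simp
  next
    case False
    then show ?thesis using W_bounds[OF assms(1), of s t h "Suc 0"] by (simp add: sink_payoff_def)
  qed
next
  case (Suc n)
  have "W G s t h (Suc n) = (\<Sum>y\<in>verts G. trans G s t h y * W G s t (h @ [y]) n)" by simp
  also have "\<dots> \<le> (\<Sum>y\<in>verts G. trans G s t h y * W G s t (h @ [y]) (Suc n))"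
  proof (rule sum_mono)
    fix y assume "y \<in> verts G"
    then show "trans G s t h y * W G s t (h @ [y]) n \<le> trans G s t h y * W G s t (h @ [y]) (Suc n)"
      using Suc.IH[of "h @ [y]"] trans_nonneg[OF assms(1)] by (intro mult_left_mono) auto
  qed
  also have "\<dots> = W G s t h (Suc (Suc n))" by simp
  finally show ?case .
qed

lemma W_bdd: "good G \<Longrightarrow> bdd_above (range (W G s t h))"
  using W_bounds by (metis bdd_aboveI2)

lemma W_le_Winf: "good G \<Longrightarrow> W G s t h n \<le> Winf G s t h"
  unfolding Winf_def by (rule cSUP_upper[OF _ W_bdd]) auto

lemma Winf_bounds: "good G \<Longrightarrow> 0 \<le> Winf G s t h \<and> Winf G s t h \<le> 1"
  unfolding Winf_def using W_bounds
  by (metis (mono_tags, lifting) W_bdd cSUP_least cSUP_upper2 UNIV_I UNIV_not_empty)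

lemma W_lim: assumes "good G" "last h \<in> verts G"
  shows "(\<lambda>n. W G s t h n) \<longlonglongrightarrow> Winf G s t h"
  unfolding Winf_def
  by (rule LIMSEQ_incseq_SUP[OF W_bdd[OF assms(1)]]) (rule incseq_SucI, rule W_mono[OF assms])

lemma Winf_eq: assumes "good G" "last h \<in> verts G"
  shows "Winf G s t h = (\<Sum>y\<in>verts G. trans G s t h y * Winf G s t (h @ [y]))"
proof -
  have "(\<lambda>n. W G s t h (Suc n)) \<longlonglongrightarrow> Winf G s t h"
    using W_lim[OF assms] by (rule LIMSEQ_Suc)
  moreover have "(\<lambda>n. W G s t h (Suc n)) \<longlonglongrightarrow> (\<Sum>y\<in>verts G. trans G s t h y * Winf G s t (h @ [y]))"
    unfolding W.simps
    by (intro tendsto_sum tendsto_mult tendsto_const W_lim[OF assms(1)]) simp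
  ultimately show ?thesis by (rule LIMSEQ_unique)
qed

definition hp where
  "hp G s t h0 r = (\<Prod>i<length r. trans G s t (h0 @ take i r) (r ! i))"

lemma hp_Cons: "hp G s t h0 (y # r) = trans G s t h0 y * hp G s t (h0 @ [y]) r"
  unfolding hp_def length_Cons prod.lessThan_Suc_shift by simp

lemma lists_Suc: "{xs. set xs \<subseteq> V \<and> length xs = Suc n} =
   (\<lambda>(y, r). y # r) ` (V \<times> {xs. set xs \<subseteq> V \<and> length xs = n})"
  by (auto simp: length_Suc_conv image_iff)

lemma W_as_sum: assumes "finite (verts G)"
  shows "W G s t h0 n = (\<Sum>r\<in>{xs. set xs \<subseteq> verts G \<and> length xs = n}.
            hp G s t h0 r * sink_payoff G (last (h0 @ r)))"
proof (induction n arbitrary: h0)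
  case 0
  have "{xs. set xs \<subseteq> verts G \<and> length xs = 0} = {[]}" by auto
  then show ?case by (simp add: hp_def)
next
  case (Suc n)
  let ?L = "{xs. set xs \<subseteq> verts G \<and> length xs = n}"
  have inj: "inj_on (\<lambda>(y, r). y # r) (verts G \<times> ?L)" by (auto simp: inj_on_def)
  have "(\<Sum>r\<in>{xs. set xs \<subseteq> verts G \<and> length xs = Suc n}. hp G s t h0 r * sink_payoff G (last (h0 @ r)))
      = (\<Sum>(y, r)\<in>verts G \<times> ?L. hp G s t h0 (y # r) * sink_payoff G (last (h0 @ y # r)))"
    unfolding lists_Suc by (subst sum.reindex[OF inj]) (simp add: case_prod_beta)
  also have "\<dots> = (\<Sum>y\<in>verts G. \<Sum>r\<in>?L. hp G s t h0 (y # r) * sink_payoff G (last (h0 @ y # r)))"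
    by (rule sum.cartesian_product[symmetric])
  also have "\<dots> = (\<Sum>y\<in>verts G. trans G s t h0 y * W G s t (h0 @ [y]) n)"
    unfolding Suc.IH hp_Cons by (simp add: sum_distrib_left mult.assoc)
  finally show ?case by simp
qed

lemma step_value_W: assumes "finite (verts G)" "x \<in> verts G"
  shows "step_value G s t x n = W G s t [x] n"
proof -
  let ?L = "{xs. set xs \<subseteq> verts G \<and> length xs = n}"
  have eq: "{h. length h = Suc n \<and> hd h = x \<and> set h \<subseteq> verts G} = (\<lambda>r. x # r) ` ?L"
    using assms(2) by (auto simp: length_Suc_conv)
  have hpr: "hprob G s t (x # r) = hp G s t [x] r" for r
    unfolding hprob_def hp_def by simp
  show ?thesis unfolding step_value_def W_as_sum[OF assms(1)] eq
    by (subst sum.reindex) (auto simp: hpr)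
qed

lemma play_value_Winf: "finite (verts G) \<Longrightarrow> x \<in> verts G \<Longrightarrow> play_value G s t x = Winf G s t [x]"
  unfolding play_value_def Winf_def by (simp add: step_value_W)

lemma W_shift:
  assumes "h1 \<noteq> []" "h2 \<noteq> []" "last h1 = last h2"
    and "\<And>r. s1 (h1 @ r) = s2 (h2 @ r)" "\<And>r. t1 (h1 @ r) = t2 (h2 @ r)"
  shows "W G s1 t1 (h1 @ r) n = W G s2 t2 (h2 @ r) n"
proof (induction n arbitrary: r)
  case 0 then show ?case using assms(1-3) by (simp add: last_append)
next
  case (Suc n)
  have e: "last (h1 @ r) = last (h2 @ r)" using assms(1-3) by (simp add: last_append)
  have "trans G s1 t1 (h1 @ r) y = trans G s2 t2 (h2 @ r) y" for y
    unfolding trans_def Let_def e assms(4) assms(5) ..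
  then show ?case using Suc.IH[of "r @ [_]"] by simp
qed

lemma hist_snoc: "is_history G h \<Longrightarrow> (last h, y) \<in> arcs G \<Longrightarrow> y \<in> verts G \<Longrightarrow> is_history G (h @ [y])"
proof -
  assume h: "is_history G h" and a: "(last h, y) \<in> arcs G" and y: "y \<in> verts G"
  have "(h @ [y]) ! i = h ! i \<and> (h @ [y]) ! Suc i = (h @ [y]) ! Suc i" if "Suc i < Suc (length h)" for i
    using that by (simp add: nth_append)
  show ?thesis unfolding is_history_def
  proof (intro conjI allI impI)
    fix i assume i: "Suc i < length (h @ [y])"
    show "((h @ [y]) ! i, (h @ [y]) ! Suc i) \<in> arcs G"
    proof (cases "Suc i < length h")
      case True then show ?thesis using h unfolding is_history_def by (simp add: nth_append)
    next
      case False
      then have "i = length h - 1" "length h = Suc i" using i by simp_all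
      then show ?thesis using a h unfolding is_history_def
        by (simp add: nth_append last_conv_nth)
    qed
  qed (use h y in \<open>auto simp: is_history_def\<close>)
qed

lemma hist_drop: "is_history G h \<Longrightarrow> k < length h \<Longrightarrow> is_history G (drop k h)"
  unfolding is_history_def by (auto dest: in_set_dropD simp: add.commute)

lemma trans_arc:
  assumes "is_ssg G" "max_strategy G s" "min_strategy G t" "is_history G h" "trans G s t h y \<noteq> 0"
  shows "(last h, y) \<in> arcs G"
proof -
  have lv: "last h \<in> verts G" using assms(4) unfolding is_history_def by auto
  have V: "vmax G \<union> vmin G \<union> vrand G \<union> sinks G = verts G" using assms(1) unfolding is_ssg_def by auto
  show ?thesis
  proof (cases "last h \<in> vmax G")
    case True then show ?thesis using assms(2,4,5) unfolding max_strategy_def trans_def Let_def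
      by (auto split: if_splits)
  next
    case nmax: False
    show ?thesis
    proof (cases "last h \<in> vmin G")
      case True then show ?thesis using nmax assms(3,4,5) unfolding min_strategy_def trans_def Let_def
        by (auto split: if_splits)
    next
      case nmin: False
      show ?thesis
      proof (cases "last h \<in> vrand G")
        case True
        then have "y \<in> succs G (last h)" using nmax nmin assms(1,5) unfolding is_ssg_def trans_def Let_def
          by auto
        then show ?thesis by (simp add: succs_def)
      next
        case False
        then have "last h \<in> sinks G" using nmax nmin lv V by auto
        moreover then have "y = last h" using nmax nmin False assms(5) unfolding trans_def Let_def
          by (auto split: if_splits)
        ultimately show ?thesis using assms(1) unfolding is_ssg_def succs_def by auto
      qed
    qed
  qed
qed

locale gsetup =
  fixes G :: "('v, 'a) ssg_scheme" and A :: "('v \<times> 'v) set" and \<sigma> \<sigma>' :: "'v \<Rightarrow> 'v"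
  assumes ssg: "is_ssg G" and AS: "A \<subseteq> arcs G"
    and ps: "positional_max G \<sigma>" and ps': "positional_max G \<sigma>'"
begin

definition T where "T = transformed G A (pos \<sigma>)"
definition sc where "sc = concat_strategy (pos \<sigma>') A (pos \<sigma>)"
definition sh where "sh = pos (lift_positional A \<sigma>')"
definition gg :: "'v \<Rightarrow> 'v \<Rightarrow> 'v + ('v \<times> 'v)" where
  "gg x y = (if (x, y) \<in> A then Inr (x, y) else Inl y)"
definition unG :: "'v + ('v \<times> 'v) \<Rightarrow> 'v" where
  "unG u = (case u of Inl y \<Rightarrow> y | Inr e \<Rightarrow> snd e)"
definition crossed where "crossed h \<longleftrightarrow> (\<exists>i. Suc i < length h \<and> (h ! i, h ! Suc i) \<in> A)"
definition sv where "sv y = strat_value G (pos \<sigma>) y"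

lemma finV: "finite (verts G)" using ssg unfolding is_ssg_def by auto
lemma arcsV: "arcs G \<subseteq> verts G \<times> verts G" using ssg unfolding is_ssg_def by auto
lemma finA: "finite A" using AS arcsV finV by (meson finite_SigmaI finite_subset)
lemma AV: "(x, y) \<in> A \<Longrightarrow> x \<in> verts G \<and> y \<in> verts G" using AS arcsV by auto
lemma classes: "vmax G \<union> vmin G \<union> vrand G \<union> sinks G = verts G" using ssg unfolding is_ssg_def by auto

lemma prob_nonneg: "x \<in> vrand G \<Longrightarrow> 0 \<le> prob G x y"
  using ssg unfolding is_ssg_def by (cases "y \<in> succs G x") (auto intro: less_imp_le)

lemma prob_sum: assumes "x \<in> vrand G" shows "sum (prob G x) (verts G) = 1"
proof -
  have "succs G x \<subseteq> verts G" using arcsV by (auto simp: succs_def)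
  then have "sum (prob G x) (verts G) = sum (prob G x) (succs G x)"
    using assms ssg finV unfolding is_ssg_def by (intro sum.mono_neutral_right) auto
  then show ?thesis using assms ssg unfolding is_ssg_def by auto
qed

lemma good_G: "good G"
  unfolding good_def using finV ssg prob_nonneg prob_sum unfolding is_ssg_def by auto

lemma T_simps:
  "verts T = Inl ` verts G \<union> Inr ` A"
  "vmax T = Inl ` vmax G" "vmin T = Inl ` vmin G" "vrand T = Inl ` vrand G"
  "sinks T = Inl ` sinks G \<union> Inr ` A"
  "arcs T = {(Inl x, Inl y) | x y. (x, y) \<in> arcs G - A}
              \<union> {(Inl x, Inr (x, y)) | x y. (x, y) \<in> A} \<union> {(Inr e, Inr e) | e. e \<in> A}"
  "val T (Inl s) = val G s" "val T (Inr (x, y)) = sv y"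
  "prob T (Inl x) (Inl y) = (if (x, y) \<in> A then 0 else prob G x y)"
  "prob T (Inl x) (Inr (x', y)) = (if x' = x \<and> (x, y) \<in> A then prob G x y else 0)"
  unfolding T_def transformed_def sv_def by simp_all

lemma gg_inj: "gg x y = gg x y' \<Longrightarrow> y = y'"
  unfolding gg_def by (auto split: if_splits)

lemma gg_verts: "y \<in> verts G \<Longrightarrow> gg x y \<in> verts T"
  unfolding gg_def T_simps by auto

lemma unG_gg[simp]: "unG (gg x y) = y" unfolding gg_def unG_def by auto

lemma arc_gg: "(x, y) \<in> arcs G \<Longrightarrow> (Inl x, gg x y) \<in> arcs T"
  unfolding gg_def T_simps by auto

lemma arcT_Inl: "(Inl x, u) \<in> arcs T \<Longrightarrow> (x, unG u) \<in> arcs G \<and> u = gg x (unG u)"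
  unfolding T_simps gg_def unG_def using AS by auto

lemma prob_gg: "prob T (Inl x) (gg x y) = prob G x y"
  unfolding gg_def by (simp add: T_simps)

lemma rand_transfer: assumes "x \<in> vrand G"
  shows "(\<Sum>u\<in>verts T. prob T (Inl x) u * F u) = (\<Sum>y\<in>verts G. prob G x y * F (gg x y))"
proof -
  have "(\<Sum>y\<in>verts G. prob G x y * F (gg x y)) = (\<Sum>u\<in>gg x ` verts G. prob T (Inl x) u * F u)"
    by (subst sum.reindex) (auto simp: inj_on_def prob_gg dest: gg_inj)
  also have "\<dots> = (\<Sum>u\<in>verts T. prob T (Inl x) u * F u)"
  proof (rule sum.mono_neutral_left)
    show "finite (verts T)" using finV finA by (simp add: T_simps)
    show "gg x ` verts G \<subseteq> verts T" using gg_verts by auto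
    show "\<forall>u\<in>verts T - gg x ` verts G. prob T (Inl x) u * F u = 0"
    proof
      fix u assume u: "u \<in> verts T - gg x ` verts G"
      show "prob T (Inl x) u * F u = 0"
      proof (cases u)
        case (Inl y)
        then show ?thesis using u by (auto simp: T_simps gg_def image_iff split: if_splits)
      next
        case (Inr e)
        then obtain x' y where e: "e = (x', y)" by (cases e)
        have "x' \<noteq> x \<or> (x, y) \<notin> A"
        proof (rule ccontr)
          assume "\<not> (x' \<noteq> x \<or> (x, y) \<notin> A)"
          then have "u = gg x y" "y \<in> verts G" using Inr e AV by (auto simp: gg_def)
          then show False using u by auto
        qed
        then show ?thesis using Inr e by (auto simp: T_simps)
      qed
    qed
  qed
  finally show ?thesis by simp
qed

end

context gsetup begin

definition \<tau>0 :: "'v list \<Rightarrow> 'v" where "\<tau>0 h = (SOME y. (last h, y) \<in> arcs G)"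

lemma \<tau>0_min: "min_strategy G \<tau>0"
  unfolding min_strategy_def
proof (intro allI impI)
  fix h assume h: "is_history G h \<and> last h \<in> vmin G"
  then have "last h \<in> verts G - sinks G" using ssg unfolding is_ssg_def is_history_def by auto
  then have "succs G (last h) \<noteq> {}" using ssg unfolding is_ssg_def by auto
  then have "\<exists>y. (last h, y) \<in> arcs G" unfolding succs_def by auto
  then show "(last h, \<tau>0 h) \<in> arcs G" unfolding \<tau>0_def by (rule someI_ex)
qed

lemma MG_ne: "{\<tau>. min_strategy G \<tau>} \<noteq> {}" using \<tau>0_min by auto

lemma pv_bounds: "y \<in> verts G \<Longrightarrow> 0 \<le> play_value G s t y \<and> play_value G s t y \<le> 1"
  using play_value_Winf[OF finV] Winf_bounds[OF good_G] by simp

lemma sv_bdd: "y \<in> verts G \<Longrightarrow> bdd_below ((\<lambda>t. play_value G s t y) ` {\<tau>. min_strategy G \<tau>})"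
  using pv_bounds by (meson bdd_belowI2)

lemma sv_bounds: assumes "y \<in> verts G" shows "0 \<le> sv y \<and> sv y \<le> 1"
proof
  show "0 \<le> sv y" unfolding sv_def strat_value_def
    by (rule cINF_greatest[OF MG_ne]) (use pv_bounds assms in auto)
  show "sv y \<le> 1" unfolding sv_def strat_value_def
    by (rule cINF_lower2[OF sv_bdd[OF assms]]) (use \<tau>0_min pv_bounds assms in auto)
qed

lemma sv_eps: assumes "y \<in> verts G" "0 < \<epsilon>"
  shows "\<exists>\<tau>. min_strategy G \<tau> \<and> play_value G (pos \<sigma>) \<tau> y \<le> sv y + \<epsilon>"
proof -
  have "Inf ((\<lambda>t. play_value G (pos \<sigma>) t y) ` {\<tau>. min_strategy G \<tau>}) < sv y + \<epsilon>"
    using assms(2) unfolding sv_def strat_value_def by simp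
  from cInf_lessD[OF _ this] MG_ne show ?thesis by (auto intro: less_imp_le)
qed

lemma finT: "finite (verts T)" using finV finA by (simp add: T_simps)

lemma probT_nonneg: "x \<in> vrand G \<Longrightarrow> 0 \<le> prob T (Inl x) u"
  by (cases u) (auto simp: T_simps prob_nonneg)

lemma valT_bounds: assumes "u \<in> sinks T" shows "0 \<le> val T u \<and> val T u \<le> 1"
proof -
  consider s where "u = Inl s" "s \<in> sinks G" | x y where "u = Inr (x, y)" "(x, y) \<in> A"
    using assms by (auto simp: T_simps)
  then show ?thesis
  proof cases
    case 1 then show ?thesis using ssg unfolding is_ssg_def by (auto simp: T_simps)
  next
    case 2 then show ?thesis using sv_bounds AV by (auto simp: T_simps)
  qed
qed

lemma good_T: "good T"
  unfolding good_def
proof (intro conjI ballI allI)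
  show "finite (verts T)" by (rule finT)
  show "sinks T \<inter> (vmax T \<union> vmin T \<union> vrand T) = {}"
  proof -
    have "sinks G \<inter> vmax G = {}" "sinks G \<inter> vmin G = {}" "sinks G \<inter> vrand G = {}"
      using ssg unfolding is_ssg_def by auto
    then show ?thesis unfolding T_simps by auto
  qed
next
  fix u y assume "u \<in> vrand T"
  then obtain x where x: "u = Inl x" "x \<in> vrand G" by (auto simp: T_simps)
  show "0 \<le> prob T u y" using x probT_nonneg by simp
  have "sum (prob T u) (verts T) = (\<Sum>y\<in>verts G. prob G x y * 1)"
    using rand_transfer[OF x(2), of "\<lambda>_. 1"] x by simp
  then show "sum (prob T u) (verts T) \<le> 1" using prob_sum[OF x(2)] by simp
next
  fix u assume "u \<in> sinks T"
  then show "0 \<le> val T u" "val T u \<le> 1" using valT_bounds by auto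
qed

lemma crossed_append: "crossed h \<Longrightarrow> crossed (h @ r)"
proof -
  assume "crossed h"
  then obtain i where "Suc i < length h" "(h ! i, h ! Suc i) \<in> A" unfolding crossed_def by blast
  then show ?thesis unfolding crossed_def by (intro exI[of _ i]) (simp add: nth_append)
qed

lemma sc_eq: "sc h = (if crossed h then \<sigma> (last h) else \<sigma>' (last h))"
proof (cases "crossed h")
  case True
  let ?P = "\<lambda>i. Suc i < length h \<and> (h ! i, h ! Suc i) \<in> A"
  have "?P (LEAST i. ?P i)" using True unfolding crossed_def by (rule LeastI_ex)
  then show ?thesis using True unfolding sc_def concat_strategy_def crossed_def pos_def
    by (auto simp: last_drop)
next
  case False then show ?thesis unfolding sc_def concat_strategy_def crossed_def pos_def by auto
qed

lemma sc_max: "max_strategy G sc"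
  using ps ps' unfolding max_strategy_def positional_max_def sc_eq by auto

lemma first_cross:
  assumes "\<not> crossed h" "h \<noteq> []" "(last h, y) \<in> A"
  shows "crossed (h @ y # r)"
    and "(LEAST i. Suc i < length (h @ y # r) \<and> ((h @ y # r) ! i, (h @ y # r) ! Suc i) \<in> A) = length h - 1"
proof -
  let ?P = "\<lambda>i. Suc i < length (h @ y # r) \<and> ((h @ y # r) ! i, (h @ y # r) ! Suc i) \<in> A"
  have P: "?P (length h - 1)" using assms(2,3) by (simp add: nth_append last_conv_nth)
  then show "crossed (h @ y # r)" unfolding crossed_def by blast
  show "(LEAST i. ?P i) = length h - 1"
  proof (rule Least_equality)
    show "?P (length h - 1)" by (rule P)
  next
    fix m assume m: "?P m"
    show "length h - 1 \<le> m"
    proof (rule ccontr)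
      assume "\<not> length h - 1 \<le> m"
      then have "Suc m < length h" by simp
      then show False using m assms(1) unfolding crossed_def by (auto simp: nth_append)
    qed
  qed
qed

lemma arcT_InlInl: "(Inl a, Inl b) \<in> arcs T \<longleftrightarrow> (a, b) \<in> arcs G - A"
  unfolding T_simps by auto

lemma vertsT_Inl: "Inl a \<in> verts T \<longleftrightarrow> a \<in> verts G"
  unfolding T_simps by auto

lemma hist_Inl: assumes "is_history G h" "\<not> crossed h" shows "is_history T (map Inl h)"
  unfolding is_history_def
proof (intro conjI allI impI)
  show "map Inl h \<noteq> []" using assms(1) unfolding is_history_def by auto
  show "set (map Inl h) \<subseteq> verts T" using assms(1) unfolding is_history_def by (auto simp: vertsT_Inl)
  fix i assume "Suc i < length (map Inl h)"
  then show "(map Inl h ! i, map Inl h ! Suc i) \<in> arcs T"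
    using assms unfolding is_history_def crossed_def by (simp add: arcT_InlInl)
qed

lemma hist_T_Inl:
  assumes "is_history T hh" "last hh = Inl x"
  shows "\<exists>h. hh = map Inl h \<and> is_history G h \<and> \<not> crossed h"
proof -
  have allInl: "\<forall>i<length hh. isl (hh ! i)"
  proof (rule ccontr)
    assume "\<not> (\<forall>i<length hh. isl (hh ! i))"
    then obtain i where i: "i < length hh" "\<not> isl (hh ! i)" by auto
    have K: "\<not> isl (hh ! (i + k))" if "i + k < length hh" for k
      using that
    proof (induction k)
      case 0 then show ?case using i by simp
    next
      case (Suc k)
      then have "(hh ! (i + k), hh ! Suc (i + k)) \<in> arcs T" using assms(1) unfolding is_history_def by auto
      then show ?case using Suc by (auto simp: T_simps)
    qed
    have ne: "hh \<noteq> []" using assms(1) unfolding is_history_def by auto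
    have eq: "i + (length hh - 1 - i) = length hh - 1" using i by simp
    have "length hh - 1 < length hh" using ne by simp
    then have "\<not> isl (hh ! (i + (length hh - 1 - i)))" by (intro K) (simp only: eq)
    then have "\<not> isl (hh ! (length hh - 1))" using eq by metis
    moreover have "hh ! (length hh - 1) = Inl x" using assms(2) ne by (simp add: last_conv_nth)
    ultimately show False by simp
  qed
  define h where "h = map projl hh"
  have hh: "hh = map Inl h" unfolding h_def using allInl
    by (simp add: list_eq_iff_nth_eq)
  have h1: "h \<noteq> []" "set h \<subseteq> verts G" using assms(1) unfolding hh is_history_def
    by (auto simp: vertsT_Inl)
  have h2: "(h ! i, h ! Suc i) \<in> arcs G - A" if "Suc i < length h" for i
    using assms(1) that unfolding hh is_history_def by (auto simp: arcT_InlInl)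
  have "is_history G h \<and> \<not> crossed h" using h1 h2 unfolding is_history_def crossed_def by auto
  then show ?thesis using hh by blast
qed

end

lemma hist_append:
  assumes "is_history G h" "is_history G r" "(last h, hd r) \<in> arcs G"
  shows "is_history G (h @ r)"
  unfolding is_history_def
proof (intro conjI allI impI)
  show "h @ r \<noteq> []" "set (h @ r) \<subseteq> verts G" using assms unfolding is_history_def by auto
  fix i assume i: "Suc i < length (h @ r)"
  have hne: "h \<noteq> []" and rne: "r \<noteq> []" using assms unfolding is_history_def by auto
  consider "Suc i < length h" | "Suc i = length h" | "length h \<le> i" by linarith
  then show "((h @ r) ! i, (h @ r) ! Suc i) \<in> arcs G"
  proof cases
    case 1 then show ?thesis using assms(1) unfolding is_history_def by (simp add: nth_append)
  next
    case 2
    then have "i = length h - 1" by simp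
    then show ?thesis using 2 assms(3) hne rne by (simp add: nth_append last_conv_nth hd_conv_nth)
  next
    case 3
    then obtain j where j: "i = length h + j" by (metis le_add_diff_inverse)
    then have "Suc j < length r" using i by simp
    then show ?thesis using assms(2) j unfolding is_history_def by (simp add: nth_append)
  qed
qed

context gsetup begin

lemma disjG: "vmax G \<inter> vmin G = {}" "vmax G \<inter> vrand G = {}" "vmax G \<inter> sinks G = {}"
  "vmin G \<inter> vrand G = {}" "vmin G \<inter> sinks G = {}" "vrand G \<inter> sinks G = {}"
  using ssg unfolding is_ssg_def by auto

lemma inl_mem: "Inl x \<in> Inl ` S \<longleftrightarrow> x \<in> S" by auto
lemma inl_nmem: "Inl x \<notin> Inr ` S" by auto

lemma payoff_T: "sink_payoff T (Inl x) = sink_payoff G x"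
  unfolding sink_payoff_def by (auto simp: T_simps)

lemma payoff_T_Inr: "(x, y) \<in> A \<Longrightarrow> sink_payoff T (Inr (x, y)) = sv y"
  unfolding sink_payoff_def by (auto simp: T_simps)

lemma sh_eq: "sh (map Inl h) = gg (last h) (\<sigma>' (last h))" if "h \<noteq> []"
  using that unfolding sh_def pos_def lift_positional_def gg_def by (simp add: last_map)

lemma hist_last: "is_history G h \<Longrightarrow> last h \<in> verts G"
  unfolding is_history_def by auto

lemma trans_T_Inl: "last hh = Inl x \<Longrightarrow> trans T s t hh u =
   (if x \<in> vmax G then (if s hh = u then 1 else 0) else if x \<in> vmin G then (if t hh = u then 1 else 0)
    else if x \<in> vrand G then prob T (Inl x) u else if x \<in> sinks G then (if u = Inl x then 1 else 0) else 0)"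
  unfolding trans_def Let_def T_simps by (simp add: inl_mem inl_nmem)

lemma transfer:
  assumes h: "is_history G h" "\<not> crossed h" "last h \<notin> sinks G"
    and mn: "last h \<in> vmin G \<Longrightarrow> th (map Inl h) = gg (last h) (t h) \<and> t h \<in> verts G"
  shows "(\<Sum>u\<in>verts T. trans T sh th (map Inl h) u * F u)
       = (\<Sum>y\<in>verts G. trans G sc t h y * F (gg (last h) y))"
proof -
  define x where "x = last h"
  have hne: "h \<noteq> []" using h unfolding is_history_def by auto
  have lm: "last (map Inl h) = Inl x" using hne unfolding x_def by (simp add: last_map)
  have xV: "x \<in> verts G" using hist_last[OF h(1)] x_def by simp
  have fT: "finite (verts T)" by (rule finT)
  consider "x \<in> vmax G" | "x \<in> vmin G" | "x \<in> vrand G" using classes xV h(3) x_def by blast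
  then show ?thesis
  proof cases
    case 1
    have sx: "\<sigma>' x \<in> verts G" using ps' 1 arcsV unfolding positional_max_def by auto
    have "(\<Sum>u\<in>verts T. trans T sh th (map Inl h) u * F u) = (\<Sum>u\<in>verts T. if gg x (\<sigma>' x) = u then F u else 0)"
      using 1 hne by (intro sum.cong) (auto simp: trans_T_Inl[OF lm] sh_eq x_def)
    also have "\<dots> = F (gg x (\<sigma>' x))" using fT gg_verts[OF sx] by simp
    also have "\<dots> = (\<Sum>y\<in>verts G. if \<sigma>' x = y then F (gg x y) else 0)" using finV sx by simp
    also have "\<dots> = (\<Sum>y\<in>verts G. trans G sc t h y * F (gg x y))"
      using 1 h(2) by (intro sum.cong) (auto simp: trans_def Let_def sc_eq x_def)
    finally show ?thesis unfolding x_def .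
  next
    case 2
    have nm: "x \<notin> vmax G" using 2 disjG by auto
    have th: "th (map Inl h) = gg x (t h)" "t h \<in> verts G" using mn 2 x_def by auto
    have "(\<Sum>u\<in>verts T. trans T sh th (map Inl h) u * F u) = (\<Sum>u\<in>verts T. if gg x (t h) = u then F u else 0)"
      using 2 nm by (intro sum.cong) (auto simp: trans_T_Inl[OF lm] th)
    also have "\<dots> = F (gg x (t h))" using fT gg_verts[OF th(2)] by simp
    also have "\<dots> = (\<Sum>y\<in>verts G. if t h = y then F (gg x y) else 0)" using finV th(2) by simp
    also have "\<dots> = (\<Sum>y\<in>verts G. trans G sc t h y * F (gg x y))"
      using 2 nm by (intro sum.cong) (auto simp: trans_def Let_def x_def)
    finally show ?thesis unfolding x_def .
  next
    case 3
    have nm: "x \<notin> vmax G" "x \<notin> vmin G" using 3 disjG by auto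
    have "(\<Sum>u\<in>verts T. trans T sh th (map Inl h) u * F u) = (\<Sum>u\<in>verts T. prob T (Inl x) u * F u)"
      using 3 nm by (intro sum.cong) (auto simp: trans_T_Inl[OF lm])
    also have "\<dots> = (\<Sum>y\<in>verts G. prob G x y * F (gg x y))" by (rule rand_transfer[OF 3])
    also have "\<dots> = (\<Sum>y\<in>verts G. trans G sc t h y * F (gg x y))"
      using 3 nm by (intro sum.cong) (auto simp: trans_def Let_def x_def)
    finally show ?thesis unfolding x_def .
  qed
qed

lemma not_crossed_snoc: assumes nc: "\<not> crossed h" and ny: "(last h, y) \<notin> A" and ne: "h \<noteq> []"
  shows "\<not> crossed (h @ [y])"
proof
  assume "crossed (h @ [y])"
  then obtain i where i: "Suc i < length (h @ [y])" and a: "((h @ [y]) ! i, (h @ [y]) ! Suc i) \<in> A"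
    unfolding crossed_def by blast
  show False
  proof (cases "Suc i < length h")
    case True then show False using nc a unfolding crossed_def by (auto simp: nth_append)
  next
    case False
    then have "i = length h - 1" "Suc i = length h" using i by auto
    then show False using a ny ne by (simp add: nth_append last_conv_nth)
  qed
qed

end

context gsetup begin

definition tA where
  "tA th \<tau>y h = (if crossed h then
     (let i = (LEAST i. Suc i < length h \<and> (h ! i, h ! Suc i) \<in> A) in \<tau>y (h ! Suc i) (drop (Suc i) h))
     else unG (th (map Inl h)))"

lemma tA_min:
  assumes th: "min_strategy T th" and ty: "\<forall>y\<in>verts G. min_strategy G (\<tau>y y)"
  shows "min_strategy G (tA th \<tau>y)"
  unfolding min_strategy_def
proof (intro allI impI)
  fix h assume h: "is_history G h \<and> last h \<in> vmin G"
  show "(last h, tA th \<tau>y h) \<in> arcs G"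
  proof (cases "crossed h")
    case True
    let ?P = "\<lambda>i. Suc i < length h \<and> (h ! i, h ! Suc i) \<in> A"
    define i where "i = (LEAST i. ?P i)"
    have Pi: "?P i" unfolding i_def using True unfolding crossed_def by (rule LeastI_ex)
    have yV: "h ! Suc i \<in> verts G" using Pi h unfolding is_history_def by auto
    have hd: "is_history G (drop (Suc i) h)" using hist_drop h Pi by blast
    have ld: "last (drop (Suc i) h) = last h" using Pi by (simp add: last_drop)
    have "(last h, \<tau>y (h ! Suc i) (drop (Suc i) h)) \<in> arcs G"
      using ty yV hd ld h unfolding min_strategy_def by metis
    then show ?thesis using True unfolding tA_def i_def Let_def by simp
  next
    case False
    have hT: "is_history T (map Inl h)" using hist_Inl h False by blast
    have hne: "h \<noteq> []" using h unfolding is_history_def by auto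
    have "last (map Inl h) \<in> vmin T" using h hne by (simp add: last_map T_simps)
    then have "(last (map Inl h), th (map Inl h)) \<in> arcs T" using th hT unfolding min_strategy_def by blast
    then have "(Inl (last h), th (map Inl h)) \<in> arcs T" using hne by (simp add: last_map)
    then show ?thesis using arcT_Inl False unfolding tA_def by auto
  qed
qed

lemma tA_after:
  assumes "\<not> crossed h" "h \<noteq> []" "(last h, y) \<in> A"
  shows "tA th \<tau>y ((h @ [y]) @ r) = \<tau>y y ([y] @ r)"
proof -
  have c: "crossed (h @ y # r)" and L: "(LEAST i. Suc i < length (h @ y # r) \<and> ((h @ y # r) ! i, (h @ y # r) ! Suc i) \<in> A) = length h - 1"
    using first_cross[OF assms] by auto
  have s: "Suc (length h - 1) = length h" using assms(2) by simp
  have "tA th \<tau>y (h @ y # r) = \<tau>y ((h @ y # r) ! Suc (length h - 1)) (drop (Suc (length h - 1)) (h @ y # r))"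
    unfolding tA_def Let_def if_P[OF c] L ..
  then show ?thesis unfolding s by (simp add: nth_append)
qed

lemma sc_after:
  assumes "\<not> crossed h" "h \<noteq> []" "(last h, y) \<in> A"
  shows "sc ((h @ [y]) @ r) = pos \<sigma> ([y] @ r)"
  using first_cross(1)[OF assms, of r] unfolding sc_eq pos_def by (simp add: last_append)

lemma dirA:
  assumes th: "min_strategy T th" and ty: "\<forall>y\<in>verts G. min_strategy G (\<tau>y y) \<and>
      play_value G (pos \<sigma>) (\<tau>y y) y \<le> sv y + \<epsilon>" and eps: "0 \<le> \<epsilon>"
  shows "is_history G h \<Longrightarrow> \<not> crossed h \<Longrightarrow> W G sc (tA th \<tau>y) h n \<le> W T sh th (map Inl h) n + \<epsilon>"
proof (induction n arbitrary: h)
  case 0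
  have hne: "h \<noteq> []" using 0 unfolding is_history_def by auto
  then show ?case using eps by (simp add: last_map payoff_T)
next
  case (Suc n)
  let ?t = "tA th \<tau>y"
  have hne: "h \<noteq> []" using Suc unfolding is_history_def by auto
  define x where "x = last h"
  have xV: "x \<in> verts G" using hist_last Suc.prems x_def by auto
  have tmin: "min_strategy G ?t" using tA_min th ty by auto
  show ?case
  proof (cases "x \<in> sinks G")
    case True
    have "W G sc ?t h (Suc n) = sink_payoff G (last h)"
      by (rule W_sink[OF good_G]) (use True xV x_def in auto)
    moreover have "W T sh th (map Inl h) (Suc n) = sink_payoff T (last (map Inl h))"
      by (rule W_sink[OF good_T]) (use True xV x_def hne in \<open>auto simp: last_map T_simps\<close>)
    ultimately show ?thesis using eps payoff_T hne x_def by (simp add: last_map)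
  next
    case False
    have mn: "th (map Inl h) = gg (last h) (?t h) \<and> ?t h \<in> verts G" if "last h \<in> vmin G"
    proof -
      have hT: "is_history T (map Inl h)" using hist_Inl Suc.prems by blast
      have "last (map Inl h) \<in> vmin T" using that hne by (simp add: last_map T_simps)
      then have "(last (map Inl h), th (map Inl h)) \<in> arcs T" using th hT unfolding min_strategy_def by blast
      then have "(Inl (last h), th (map Inl h)) \<in> arcs T" using hne by (simp add: last_map)
      then show ?thesis using arcT_Inl Suc.prems(2) arcsV unfolding tA_def by auto
    qed
    have eqT: "W T sh th (map Inl h) (Suc n) = (\<Sum>y\<in>verts G. trans G sc ?t h y * W T sh th (map Inl h @ [gg x y]) n)"
      unfolding W.simps x_def by (rule transfer[where F = "\<lambda>u. W T sh th (map Inl h @ [u]) n" and h = h and th = th and t = ?t, OF Suc.prems False[unfolded x_def] mn])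
    have termw: "trans G sc ?t h y * W G sc ?t (h @ [y]) n \<le> trans G sc ?t h y * (W T sh th (map Inl h @ [gg x y]) n + \<epsilon>)"
      if y: "y \<in> verts G" for y
    proof (cases "trans G sc ?t h y = 0")
      case True then show ?thesis by simp
    next
      case nz: False
      have arc: "(x, y) \<in> arcs G" using trans_arc[OF ssg sc_max tmin Suc.prems(1) nz] x_def by simp
      have tnn: "0 \<le> trans G sc ?t h y" by (rule trans_nonneg[OF good_G])
      show ?thesis
      proof (cases "(x, y) \<in> A")
        case False
        have hy: "is_history G (h @ [y])" by (rule hist_snoc[OF Suc.prems(1)]) (use arc y x_def in auto)
        have ncy: "\<not> crossed (h @ [y])" by (rule not_crossed_snoc[OF Suc.prems(2) _ hne]) (use False x_def in auto)
        have "W G sc ?t (h @ [y]) n \<le> W T sh th (map Inl (h @ [y])) n + \<epsilon>" using Suc.IH[OF hy ncy] .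
        then show ?thesis using False tnn by (simp add: gg_def mult_left_mono)
      next
        case True
        have "W G sc ?t ((h @ [y]) @ []) n = W G (pos \<sigma>) (\<tau>y y) ([y] @ []) n"
          by (rule W_shift) (use sc_after tA_after Suc.prems(2) hne True x_def in auto)
        then have "W G sc ?t (h @ [y]) n = W G (pos \<sigma>) (\<tau>y y) [y] n" by simp
        also have "\<dots> \<le> Winf G (pos \<sigma>) (\<tau>y y) [y]" by (rule W_le_Winf[OF good_G])
        also have "\<dots> = play_value G (pos \<sigma>) (\<tau>y y) y" using play_value_Winf[OF finV y] by simp
        also have "\<dots> \<le> sv y + \<epsilon>" using ty y by auto
        also have "sv y = W T sh th (map Inl h @ [gg x y]) n"
          using W_sink[OF good_T, of "map Inl h @ [gg x y]"] True payoff_T_Inr[OF True]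
          by (simp add: gg_def T_simps)
        finally show ?thesis using tnn by (simp add: mult_left_mono)
      qed
    qed
    have "W G sc ?t h (Suc n) = (\<Sum>y\<in>verts G. trans G sc ?t h y * W G sc ?t (h @ [y]) n)" by simp
    also have "\<dots> \<le> (\<Sum>y\<in>verts G. trans G sc ?t h y * (W T sh th (map Inl h @ [gg x y]) n + \<epsilon>))"
      by (rule sum_mono) (rule termw)
    also have "\<dots> = W T sh th (map Inl h) (Suc n) + \<epsilon> * (\<Sum>y\<in>verts G. trans G sc ?t h y)"
      unfolding eqT by (simp add: distrib_left sum.distrib sum_distrib_left mult.commute)
    also have "\<dots> \<le> W T sh th (map Inl h) (Suc n) + \<epsilon>"
      using trans_sum_le1[OF good_G, of sc ?t h] eps by (simp add: mult_left_le)
    finally show ?thesis .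
  qed
qed

end

context gsetup begin

definition tB where "tB t hh = gg (last (map projl hh)) (t (map projl hh))"

lemma projl_comp_Inl[simp]: "projl \<circ> Inl = id" by (rule ext) simp

lemma projl_Inl[simp]: "map projl (map Inl h) = h" by (induction h) auto

lemma tB_min: assumes t: "min_strategy G t" shows "min_strategy T (tB t)"
  unfolding min_strategy_def
proof (intro allI impI)
  fix hh assume hh: "is_history T hh \<and> last hh \<in> vmin T"
  then obtain x where x: "last hh = Inl x" "x \<in> vmin G" by (auto simp: T_simps)
  obtain h where h: "hh = map Inl h" "is_history G h" "\<not> crossed h" using hist_T_Inl hh x by blast
  have hne: "h \<noteq> []" using h unfolding is_history_def by auto
  have lx: "last h = x" using x h hne by (simp add: last_map)
  have "(x, t h) \<in> arcs G" using t h x lx unfolding min_strategy_def by auto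
  moreover have "tB t hh = gg x (t h)" unfolding tB_def h(1) projl_Inl lx by (rule refl)
  ultimately show "(last hh, tB t hh) \<in> arcs T" using x arc_gg by simp
qed

definition tcont where "tcont t h y r = (if r \<noteq> [] \<and> hd r = y then t (h @ r) else \<tau>0 r)"

lemma tcont_min: assumes t: "min_strategy G t" and h: "is_history G h" and a: "(last h, y) \<in> arcs G"
  shows "min_strategy G (tcont t h y)"
  unfolding min_strategy_def
proof (intro allI impI)
  fix r assume r: "is_history G r \<and> last r \<in> vmin G"
  show "(last r, tcont t h y r) \<in> arcs G"
  proof (cases "r \<noteq> [] \<and> hd r = y")
    case True
    have "is_history G (h @ r)" by (rule hist_append) (use h r a True in auto)
    moreover have "last (h @ r) = last r" using True by simp
    ultimately show ?thesis using t r True unfolding min_strategy_def tcont_def by metis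
  next
    case False
    then show ?thesis using \<tau>0_min r unfolding min_strategy_def tcont_def by auto
  qed
qed

lemma Winf_sink_ge: "last h \<in> verts G \<Longrightarrow> W G s t h 0 \<le> Winf G s t h"
  by (rule W_le_Winf[OF good_G])

lemma dirB:
  assumes t: "min_strategy G t"
  shows "is_history G h \<Longrightarrow> \<not> crossed h \<Longrightarrow> W T sh (tB t) (map Inl h) n \<le> Winf G sc t h"
proof (induction n arbitrary: h)
  case 0
  have hne: "h \<noteq> []" using 0 unfolding is_history_def by auto
  have "W T sh (tB t) (map Inl h) 0 = W G sc t h 0" using hne by (simp add: last_map payoff_T)
  then show ?case using W_le_Winf[OF good_G, of sc t h 0] by linarith
next
  case (Suc n)
  let ?t = "tB t"
  have hne: "h \<noteq> []" using Suc unfolding is_history_def by auto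
  define x where "x = last h"
  have xV: "x \<in> verts G" using hist_last Suc.prems x_def by auto
  show ?case
  proof (cases "x \<in> sinks G")
    case True
    have "W T sh ?t (map Inl h) (Suc n) = sink_payoff T (last (map Inl h))"
      by (rule W_sink[OF good_T]) (use True xV x_def hne in \<open>auto simp: last_map T_simps\<close>)
    also have "\<dots> = W G sc t h 0" using hne by (simp add: last_map payoff_T)
    finally show ?thesis using W_le_Winf[OF good_G, of sc t h 0] by linarith
  next
    case False
    have mn: "?t (map Inl h) = gg (last h) (t h) \<and> t h \<in> verts G" if "last h \<in> vmin G"
    proof -
      have "(last h, t h) \<in> arcs G" using t Suc.prems that unfolding min_strategy_def by auto
      then show ?thesis unfolding tB_def using arcsV by auto
    qed
    have eqT: "W T sh ?t (map Inl h) (Suc n) = (\<Sum>y\<in>verts G. trans G sc t h y * W T sh ?t (map Inl h @ [gg x y]) n)"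
      unfolding W.simps x_def by (rule transfer[where F = "\<lambda>u. W T sh ?t (map Inl h @ [u]) n" and h = h and th = ?t and t = t, OF Suc.prems False[unfolded x_def] mn])
    have termw: "trans G sc t h y * W T sh ?t (map Inl h @ [gg x y]) n \<le> trans G sc t h y * Winf G sc t (h @ [y])"
      if y: "y \<in> verts G" for y
    proof (cases "trans G sc t h y = 0")
      case True then show ?thesis by simp
    next
      case nz: False
      have arc: "(x, y) \<in> arcs G" using trans_arc[OF ssg sc_max t Suc.prems(1) nz] x_def by simp
      have tnn: "0 \<le> trans G sc t h y" by (rule trans_nonneg[OF good_G])
      show ?thesis
      proof (cases "(x, y) \<in> A")
        case False
        have hy: "is_history G (h @ [y])" by (rule hist_snoc[OF Suc.prems(1)]) (use arc y x_def in auto)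
        have ncy: "\<not> crossed (h @ [y])" by (rule not_crossed_snoc[OF Suc.prems(2) _ hne]) (use False x_def in auto)
        have "W T sh ?t (map Inl (h @ [y])) n \<le> Winf G sc t (h @ [y])" using Suc.IH[OF hy ncy] .
        then show ?thesis using False tnn by (simp add: gg_def mult_left_mono)
      next
        case True
        have tc: "min_strategy G (tcont t h y)" by (rule tcont_min[OF t Suc.prems(1)]) (use arc x_def in auto)
        have eqW: "W G sc t ((h @ [y]) @ []) m = W G (pos \<sigma>) (tcont t h y) ([y] @ []) m" for m
          by (rule W_shift) (use sc_after Suc.prems(2) hne True x_def in \<open>auto simp: tcont_def\<close>)
        have "W T sh ?t (map Inl h @ [gg x y]) n = sv y"
          using W_sink[OF good_T, of "map Inl h @ [gg x y]"] True payoff_T_Inr[OF True]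
          by (simp add: gg_def T_simps)
        also have "sv y \<le> play_value G (pos \<sigma>) (tcont t h y) y"
          unfolding sv_def strat_value_def by (rule cINF_lower[OF sv_bdd[OF y]]) (use tc in auto)
        also have "\<dots> = Winf G (pos \<sigma>) (tcont t h y) [y]" using play_value_Winf[OF finV y] by simp
        also have "\<dots> = Winf G sc t (h @ [y])" unfolding Winf_def using eqW by simp
        finally show ?thesis using tnn by (simp add: mult_left_mono)
      qed
    qed
    have "W T sh ?t (map Inl h) (Suc n) \<le> (\<Sum>y\<in>verts G. trans G sc t h y * Winf G sc t (h @ [y]))"
      unfolding eqT by (rule sum_mono) (rule termw)
    also have "\<dots> = Winf G sc t h" using Winf_eq[OF good_G] xV x_def by simp
    finally show ?thesis .
  qed
qed

end

context gsetup begin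

lemma hist_single: "x \<in> verts G \<Longrightarrow> is_history G [x]" unfolding is_history_def by auto
lemma ncross_single: "\<not> crossed [x]" unfolding crossed_def by auto

lemma MT_ne: "{\<tau>. min_strategy T \<tau>} \<noteq> {}" using tB_min[OF \<tau>0_min] by auto

lemma pvT_bounds: "u \<in> verts T \<Longrightarrow> 0 \<le> play_value T s t u"
  using play_value_Winf[OF finT] Winf_bounds[OF good_T] by simp

lemma main: assumes x: "x \<in> verts G"
  shows "strat_value G sc x = strat_value T sh (Inl x)"
proof -
  have xT: "Inl x \<in> verts T" using x by (simp add: T_simps)
  have bddG: "bdd_below ((\<lambda>t. play_value G sc t x) ` {\<tau>. min_strategy G \<tau>})"
    using pv_bounds x by (meson bdd_belowI2)
  have bddT: "bdd_below ((\<lambda>t. play_value T sh t (Inl x)) ` {\<tau>. min_strategy T \<tau>})"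
    using pvT_bounds xT by (meson bdd_belowI2)
  have le1: "strat_value T sh (Inl x) \<le> strat_value G sc x"
    unfolding strat_value_def
  proof (rule cINF_greatest[OF MG_ne])
    fix t assume "t \<in> {\<tau>. min_strategy G \<tau>}"
    then have t: "min_strategy G t" by simp
    have "(INF \<tau>\<in>{\<tau>. min_strategy T \<tau>}. play_value T sh \<tau> (Inl x)) \<le> play_value T sh (tB t) (Inl x)"
      by (rule cINF_lower[OF bddT]) (use tB_min[OF t] in simp)
    also have "\<dots> = Winf T sh (tB t) [Inl x]" using play_value_Winf[OF finT xT] by simp
    also have "\<dots> \<le> Winf G sc t [x]"
      unfolding Winf_def[of T]
    proof (rule cSUP_least)
      fix n
      show "W T sh (tB t) [Inl x] n \<le> Winf G sc t [x]"
        using dirB[OF t hist_single[OF x] ncross_single, of n] by simp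
    qed simp
    also have "\<dots> = play_value G sc t x" using play_value_Winf[OF finV x] by simp
    finally show "(INF \<tau>\<in>{\<tau>. min_strategy T \<tau>}. play_value T sh \<tau> (Inl x)) \<le> play_value G sc t x" .
  qed
  have le2: "strat_value G sc x \<le> strat_value T sh (Inl x)"
    unfolding strat_value_def
  proof (rule cINF_greatest[OF MT_ne])
    fix th assume "th \<in> {\<tau>. min_strategy T \<tau>}"
    then have th: "min_strategy T th" by simp
    show "(INF \<tau>\<in>{\<tau>. min_strategy G \<tau>}. play_value G sc \<tau> x) \<le> play_value T sh th (Inl x)"
    proof (rule field_le_epsilon)
      fix \<epsilon> :: real assume eps: "0 < \<epsilon>"
      have "\<forall>y\<in>verts G. \<exists>\<tau>. min_strategy G \<tau> \<and> play_value G (pos \<sigma>) \<tau> y \<le> sv y + \<epsilon>"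
        using sv_eps eps by blast
      then obtain \<tau>y where ty: "\<forall>y\<in>verts G. min_strategy G (\<tau>y y) \<and> play_value G (pos \<sigma>) (\<tau>y y) y \<le> sv y + \<epsilon>"
        by metis
      have tmin: "min_strategy G (tA th \<tau>y)" using tA_min th ty by auto
      have "(INF \<tau>\<in>{\<tau>. min_strategy G \<tau>}. play_value G sc \<tau> x) \<le> play_value G sc (tA th \<tau>y) x"
        by (rule cINF_lower[OF bddG]) (use tmin in simp)
      also have "\<dots> = Winf G sc (tA th \<tau>y) [x]" using play_value_Winf[OF finV x] by simp
      also have "\<dots> \<le> Winf T sh th [Inl x] + \<epsilon>"
        unfolding Winf_def[of G]
      proof (rule cSUP_least)
        fix n
        have "W G sc (tA th \<tau>y) [x] n \<le> W T sh th (map Inl [x]) n + \<epsilon>"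
          by (rule dirA[OF th ty _ hist_single[OF x] ncross_single]) (use eps in simp)
        also have "\<dots> \<le> Winf T sh th [Inl x] + \<epsilon>" using W_le_Winf[OF good_T, of sh th "[Inl x]" n] by simp
        finally show "W G sc (tA th \<tau>y) [x] n \<le> Winf T sh th [Inl x] + \<epsilon>" .
      qed simp
      also have "\<dots> = play_value T sh th (Inl x) + \<epsilon>" using play_value_Winf[OF finT xT] by simp
      finally show "(INF \<tau>\<in>{\<tau>. min_strategy G \<tau>}. play_value G sc \<tau> x) \<le> play_value T sh th (Inl x) + \<epsilon>" .
    qed
  qed
  show ?thesis using le1 le2 by simp
qed

end

theorem lemma16:
  fixes G :: "('v, 'a) ssg_scheme"
    and A :: "('v \<times> 'v) set"
    and \<sigma> \<sigma>' :: "'v \<Rightarrow> 'v"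
  assumes "is_ssg G"
    and "A \<subseteq> arcs G"
    and "positional_max G \<sigma>"
    and "positional_max G \<sigma>'"
  shows "\<forall>x \<in> verts G.
           strat_value G (concat_strategy (pos \<sigma>') A (pos \<sigma>)) x
         = strat_value (transformed G A (pos \<sigma>)) (pos (lift_positional A \<sigma>')) (Inl x)"
proof
  fix x assume x: "x \<in> verts G"
  interpret gsetup G A \<sigma> \<sigma>' using assms by unfold_locales
  show "strat_value G (concat_strategy (pos \<sigma>') A (pos \<sigma>)) x
         = strat_value (transformed G A (pos \<sigma>)) (pos (lift_positional A \<sigma>')) (Inl x)"
    using main[OF x] unfolding sc_def T_def sh_def .
qed

end
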